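(* Let $N\ge2$, $m>0$, $a_0>0$. For each large integer $K$ let $R>0$ be such that $d=2R\sin\frac\pi K$ satisfies $$a_0mR^{-m-1}=2\sin\frac{\pi}{K}\,\Psi(d),$$ and assume $d\to+\infty$ as $K\to\infty$. Then, as $K\to\infty$, $$d=m\ln K+\Big(m-\frac{N-3}{2}\Big)\ln(m\ln K)+O(1),$$ $$R=\frac{m}{2\pi}K\ln K+\frac{1}{2\pi}\Big(m-\frac{N-3}{2}\Big)K\ln(m\ln K)+O(K).$$
   Context: $w$ is the unique positive radial $H^1$ solution of $-\Delta w+w-w^p=0$ in $\mathbb{R}^N$ ($1<p$, $p<\frac{N+2}{N-2}$ if $N\ge3$), and $\Psi(s)=-\int_{\mathbb{R}^N}w(x-s\vec e)\,\mathrm{div}(w^p(x)\vec e)\,dx$ for a unit vector $\vec e$. One uses that $\Psi(s)=c_{N,p}s^{-\frac{N-1}{2}}e^{-s}(1+O(s^{-1}))$ as $s\to\infty$ for a constant $c_{N,p}>0$. *)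

theory Defs
  imports "HOL-Analysis.Analysis" "HOL-Library.Landau_Symbols"
begin

end

theory Submission
  imports Defs "HOL-Real_Asymp.Real_Asymp"
begin

lemma key_ident:
  fixes R s d P K a0 m c e \<rho> :: real
  assumes R: "R > 0" and s: "s > 0" and K: "K > 0" and d: "d = 2 * R * s"
    and eq: "a0 * m * R powr (- m - 1) = 2 * s * P"
    and c: "c > 0" and a0: "a0 > 0" and m: "m > 0"
    and rho: "\<rho> = P / (c * d powr e * exp (- d))"
  shows "\<rho> > 0 \<and> d - m * ln K - (m + 1 + e) * ln d
           = ln \<rho> + ln c - ln (a0 * m) - m * ln 2 - m * ln (s * K)"
proof -
  have dpos: "d > 0" using R s d by simp
  have P: "P = a0 * m * R powr (- m - 1) / (2 * s)" using eq s by (simp add: field_simps)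
  have Ppos: "P > 0" unfolding P using R s a0 m by simp
  have rpos: "\<rho> > 0" unfolding rho using Ppos c dpos by simp
  have lnP: "ln P = ln (a0 * m) + (- m - 1) * ln R - ln 2 - ln s"
    unfolding P using R s a0 m by (simp add: ln_div ln_mult ln_powr)
  have lnrho: "ln \<rho> = ln P - ln c - e * ln d + d"
    unfolding rho using Ppos c dpos by (simp add: ln_div ln_mult ln_powr)
  have Rd: "R = d / (2 * s)" using d s by simp
  have lnR: "ln R = ln d - ln 2 - ln s"
    unfolding Rd using dpos s by (simp add: ln_div ln_mult)
  have lnsK: "ln (s * K) = ln s + ln K" using s K by (simp add: ln_mult)
  show ?thesis using rpos lnrho lnP lnR lnsK by (simp add: algebra_simps)
qed

theorem lemma3p3:
  fixes N :: nat and m a0 c :: real and \<Psi> :: "real \<Rightarrow> real"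
    and R d :: "nat \<Rightarrow> real"
  assumes N: "N \<ge> 2" and m: "m > 0" and a0: "a0 > 0" and c: "c > 0"
    and Psi_asymp: "(\<lambda>s. \<Psi> s / (c * s powr (- (real N - 1) / 2) * exp (- s)) - 1)
                      \<in> O[at_top](\<lambda>s. 1 / s)"
    and d_def: "\<And>K. d K = 2 * R K * sin (pi / real K)"
    and R_eq: "eventually (\<lambda>K. R K > 0 \<and>
                 a0 * m * R K powr (- m - 1) = 2 * sin (pi / real K) * \<Psi> (d K)) at_top"
    and d_lim: "filterlim d at_top at_top"
  shows "(\<lambda>K. d K - m * ln (real K) - (m - (real N - 3) / 2) * ln (m * ln (real K)))
           \<in> O(\<lambda>_. 1) \<and>
         (\<lambda>K. R K - m / (2 * pi) * real K * ln (real K)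
              - 1 / (2 * pi) * (m - (real N - 3) / 2) * real K * ln (m * ln (real K)))
           \<in> O(\<lambda>K. real K)"
proof -
  define \<alpha> where "\<alpha> = m - (real N - 3) / 2"
  define e where "e = - (real N - 1) / 2"
  have \<alpha>e: "\<alpha> = m + 1 + e" unfolding \<alpha>_def e_def by (simp add: field_simps)
  define g where "g = (\<lambda>s. \<Psi> s / (c * s powr (- (real N - 1) / 2) * exp (- s)) - 1)"
  define \<rho> where "\<rho> = (\<lambda>K. \<Psi> (d K) / (c * d K powr e * exp (- d K)))"
  define L0 where "L0 = ln c - ln (a0 * m) - m * ln 2 - m * ln pi"
  define E where "E = (\<lambda>K. d K - m * ln (real K) - \<alpha> * ln (d K))"
  define F where "F = (\<lambda>K. d K - m * ln (real K) - \<alpha> * ln (m * ln (real K)))"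
  define Q where "Q = (\<lambda>K. d K / (m * ln (real K)))"
  from Psi_asymp obtain C where C: "C > 0"
    and Cb: "eventually (\<lambda>x. norm (g x) \<le> C * norm (1 / x)) at_top"
    unfolding g_def by (elim landau_o.bigE) blast
  have "((\<lambda>x::real. C * norm (1 / x)) \<longlongrightarrow> 0) at_top"
    by (intro tendsto_mult_right_zero tendsto_norm_zero) real_asymp
  with Cb have glim: "(g \<longlongrightarrow> 0) at_top" by (rule Lim_null_comparison)
  have gd: "((\<lambda>K. g (d K)) \<longlongrightarrow> 0) at_top"
    using filterlim_compose[OF glim d_lim] by (simp add: o_def)
  have "((\<lambda>K. 1 + g (d K)) \<longlongrightarrow> 1 + 0) at_top" by (intro tendsto_intros gd)
  hence rho_lim: "(\<rho> \<longlongrightarrow> 1) at_top" unfolding \<rho>_def g_def e_def by simp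
  have lnrho_lim: "((\<lambda>K. ln (\<rho> K)) \<longlongrightarrow> 0) at_top"
    using tendsto_ln[OF rho_lim] by simp
  have ev_d: "eventually (\<lambda>K. d K > 1) at_top"
    using d_lim unfolding filterlim_at_top_dense by blast
  have ev_K: "eventually (\<lambda>K::nat. K \<ge> 2) at_top" by (rule eventually_ge_at_top)
  have ev_s: "eventually (\<lambda>K::nat. sin (pi / real K) > 0) at_top"
    using ev_K
  proof eventually_elim
    case (elim K)
    have "pi / real K < pi" using elim by (simp add: field_simps)
    moreover have "0 < pi / real K" using elim by simp
    ultimately show ?case by (intro sin_gt_zero) auto
  qed
  have ev_ln: "eventually (\<lambda>K::nat. ln (real K) > 0) at_top"
    using ev_K by eventually_elim simp
  have ev_E: "eventually (\<lambda>K. \<rho> K > 0 \<and>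
       E K = ln (\<rho> K) + ln c - ln (a0 * m) - m * ln 2 - m * ln (sin (pi / real K) * real K)) at_top"
    using R_eq ev_s ev_K
  proof eventually_elim
    case (elim K)
    show ?case
      using key_ident[of "R K" "sin (pi / real K)" "real K" "d K" a0 m "\<Psi> (d K)" c "\<rho> K" e]
        elim d_def[of K] c a0 m unfolding E_def \<rho>_def \<alpha>e by (auto simp: mult.commute)
  qed
  have sK: "((\<lambda>K::nat. sin (pi / real K) * real K) \<longlongrightarrow> pi) at_top" by real_asymp
  have "((\<lambda>K. ln (\<rho> K) + ln c - ln (a0 * m) - m * ln 2 - m * ln (sin (pi / real K) * real K))
          \<longlongrightarrow> 0 + ln c - ln (a0 * m) - m * ln 2 - m * ln pi) at_top"
    by (intro tendsto_intros lnrho_lim sK) simp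
  hence "((\<lambda>K. ln (\<rho> K) + ln c - ln (a0 * m) - m * ln 2 - m * ln (sin (pi / real K) * real K))
          \<longlongrightarrow> L0) at_top" by (simp add: L0_def)
  hence E_lim: "(E \<longlongrightarrow> L0) at_top"
  proof (rule tendsto_cong[THEN iffD1, rotated])
    show "\<forall>\<^sub>F K in at_top. ln (\<rho> K) + ln c - ln (a0 * m) - m * ln 2 - m * ln (sin (pi / real K) * real K) = E K"
      using ev_E by (auto elim: eventually_mono)
  qed
  have lnx: "((\<lambda>x::real. ln x / x) \<longlongrightarrow> 0) at_top" by real_asymp
  have lndd: "((\<lambda>K. ln (d K) / d K) \<longlongrightarrow> 0) at_top"
    using filterlim_compose[OF lnx d_lim] by (simp add: o_def)
  have B_lim: "((\<lambda>K. 1 - \<alpha> * (ln (d K) / d K)) \<longlongrightarrow> 1) at_top"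
    using tendsto_diff[OF tendsto_const tendsto_mult[OF tendsto_const lndd], of 1 \<alpha>] by simp
  have invln: "((\<lambda>K::nat. 1 / (m * ln (real K))) \<longlongrightarrow> 0) at_top"
    using m by real_asymp
  have A_lim: "((\<lambda>K. 1 + E K * (1 / (m * ln (real K)))) \<longlongrightarrow> 1) at_top"
    using tendsto_add[OF tendsto_const tendsto_mult[OF E_lim invln], of 1] by simp
  have ev_B: "eventually (\<lambda>K. 1 - \<alpha> * (ln (d K) / d K) > 0) at_top"
    using B_lim by (rule order_tendstoD) simp
  have "((\<lambda>K. (1 + E K * (1 / (m * ln (real K)))) / (1 - \<alpha> * (ln (d K) / d K))) \<longlongrightarrow> 1 / 1) at_top"
    by (intro tendsto_divide A_lim B_lim) simp
  hence "((\<lambda>K. (1 + E K * (1 / (m * ln (real K)))) / (1 - \<alpha> * (ln (d K) / d K))) \<longlongrightarrow> 1) at_top"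
    by simp
  hence Q_lim: "(Q \<longlongrightarrow> 1) at_top"
  proof (rule tendsto_cong[THEN iffD1, rotated])
    show "\<forall>\<^sub>F K in at_top. (1 + E K * (1 / (m * ln (real K)))) / (1 - \<alpha> * (ln (d K) / d K)) = Q K"
      using ev_B ev_d ev_ln
    proof eventually_elim
      case (elim K)
      have "1 - \<alpha> * (ln (d K) / d K) = (d K - \<alpha> * ln (d K)) / d K"
        using elim by (simp add: field_simps)
      moreover have "1 + E K * (1 / (m * ln (real K))) = (d K - \<alpha> * ln (d K)) / (m * ln (real K))"
        using elim m unfolding E_def by (simp add: field_simps)
      moreover have "d K - \<alpha> * ln (d K) \<noteq> 0"
        using elim calculation by auto
      moreover have "((d K - \<alpha> * ln (d K)) / (m * ln (real K))) / ((d K - \<alpha> * ln (d K)) / d K)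
          = d K / (m * ln (real K))"
        using calculation(3) elim m by (simp add: field_simps)
      ultimately show ?case unfolding Q_def by simp
    qed
  qed
  have lnQ: "((\<lambda>K. ln (Q K)) \<longlongrightarrow> 0) at_top"
    using tendsto_ln[OF Q_lim] by simp
  have "((\<lambda>K. E K + \<alpha> * ln (Q K)) \<longlongrightarrow> L0 + \<alpha> * 0) at_top"
    by (intro tendsto_intros E_lim lnQ)
  hence "((\<lambda>K. E K + \<alpha> * ln (Q K)) \<longlongrightarrow> L0) at_top" by simp
  hence F_lim: "(F \<longlongrightarrow> L0) at_top"
  proof (rule tendsto_cong[THEN iffD1, rotated])
    show "\<forall>\<^sub>F K in at_top. E K + \<alpha> * ln (Q K) = F K"
      using ev_d ev_ln
    proof eventually_elim
      case (elim K)
      have "ln (Q K) = ln (d K) - ln (m * ln (real K))"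
        unfolding Q_def using elim m by (simp add: ln_div)
      thus ?case unfolding E_def F_def by (simp add: algebra_simps flip: distrib_left)
    qed
  qed
  have part1: "F \<in> O(\<lambda>_. 1)"
    by (rule bigoI_tendsto[where c = L0]) (use F_lim in simp_all)
  have H1: "((\<lambda>K::nat. ln (real K) * (pi - sin (pi / real K) * real K)) \<longlongrightarrow> 0) at_top"
    by real_asymp
  have H2: "((\<lambda>K. 1 / (2 * pi * (sin (pi / real K) * real K))) \<longlongrightarrow> 1 / (2 * pi * pi)) at_top"
    by (intro tendsto_intros sK) simp
  have "((\<lambda>K. F K / (2 * pi) + Q K * m * ((ln (real K) * (pi - sin (pi / real K) * real K))
            * (1 / (2 * pi * (sin (pi / real K) * real K)))))
          \<longlongrightarrow> L0 / (2 * pi) + 1 * m * (0 * (1 / (2 * pi * pi)))) at_top"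
    by (intro tendsto_intros F_lim Q_lim H1 H2) simp
  hence "((\<lambda>K. F K / (2 * pi) + Q K * m * ((ln (real K) * (pi - sin (pi / real K) * real K))
            * (1 / (2 * pi * (sin (pi / real K) * real K)))))
          \<longlongrightarrow> L0 / (2 * pi)) at_top" by simp
  hence G_lim: "((\<lambda>K. (R K - m / (2 * pi) * real K * ln (real K)
              - 1 / (2 * pi) * \<alpha> * real K * ln (m * ln (real K))) / real K) \<longlongrightarrow> L0 / (2 * pi)) at_top"
  proof (rule tendsto_cong[THEN iffD1, rotated])
    show "\<forall>\<^sub>F K in at_top. F K / (2 * pi) + Q K * m * ((ln (real K) * (pi - sin (pi / real K) * real K))
            * (1 / (2 * pi * (sin (pi / real K) * real K)))) =
          (R K - m / (2 * pi) * real K * ln (real K)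
              - 1 / (2 * pi) * \<alpha> * real K * ln (m * ln (real K))) / real K"
      using ev_s ev_ln ev_K
    proof eventually_elim
      case (elim K)
      have Kp: "real K > 0" using elim by simp
      have RK: "R K = d K / (2 * sin (pi / real K))" using d_def[of K] elim by simp
      have QK: "Q K * m * ln (real K) = d K" unfolding Q_def using elim m by simp
      have "Q K * m * ((ln (real K) * (pi - sin (pi / real K) * real K))
            * (1 / (2 * pi * (sin (pi / real K) * real K))))
           = d K * (pi - sin (pi / real K) * real K) / (2 * pi * (sin (pi / real K) * real K))"
        using QK by (simp add: field_simps)
      also have "\<dots> = d K / (2 * sin (pi / real K) * real K) - d K / (2 * pi)"
        using elim Kp by (simp add: field_simps)
      finally have calc: "Q K * m * ((ln (real K) * (pi - sin (pi / real K) * real K))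
            * (1 / (2 * pi * (sin (pi / real K) * real K))))
           = d K / (2 * sin (pi / real K) * real K) - d K / (2 * pi)" .
      have r1: "(R K - m / (2 * pi) * real K * ln (real K)
              - 1 / (2 * pi) * \<alpha> * real K * ln (m * ln (real K))) / real K
           = R K / real K - m / (2 * pi) * ln (real K) - 1 / (2 * pi) * \<alpha> * ln (m * ln (real K))"
        using Kp by (simp add: field_simps)
      have r2: "R K / real K = d K / (2 * sin (pi / real K) * real K)" using RK by simp
      have r3: "F K / (2 * pi) = d K / (2 * pi) - m / (2 * pi) * ln (real K)
                  - 1 / (2 * pi) * \<alpha> * ln (m * ln (real K))"
        unfolding F_def by (simp add: field_simps)
      show ?case using calc r1 r2 r3 by linarith
    qed
  qed
  have part2: "(\<lambda>K. R K - m / (2 * pi) * real K * ln (real K)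
              - 1 / (2 * pi) * \<alpha> * real K * ln (m * ln (real K))) \<in> O(\<lambda>K. real K)"
    by (rule bigoI_tendsto[OF G_lim]) (use ev_K in \<open>auto elim: eventually_mono\<close>)
  show ?thesis using part1 part2 unfolding F_def \<alpha>_def by simp
qed

end
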